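(* Let $r\ge 1$, let $\sigma_1\ge\sigma_2\ge\cdots\ge\sigma_r>0$ be real numbers and $c_1,\ldots,c_r\in\mathbb{C}$, and define the rational function $$\psi(\nu)=\sum_{i=1}^r \frac{|c_i|^2}{(\sigma_i^2+\nu)^2}=\sum_{i=1}^r \frac{|c_i|^2}{(\delta_i-\nu)^2},\qquad \delta_i=-\sigma_i^2,$$ so that $\delta_1\le\cdots\le\delta_r<0$. Assume that the poles of $\psi$ are not all identical, i.e. there exist indices $i,j$ with $c_i\neq 0$, $c_j\neq 0$ and $\delta_i\neq\delta_j$. Let $\nu^{(l)}\ge 0$ and define $$\alpha=\frac{4\big(\psi(\nu^{(l)})\big)^3}{\big(\psi'(\nu^{(l)})\big)^2},\qquad \beta=\nu^{(l)}+\frac{2\psi(\nu^{(l)})}{\psi'(\nu^{(l)})},\qquad F(\nu;\alpha,\beta)=\frac{\alpha}{(\beta-\nu)^2},$$ so that $F(\nu^{(l)};\alpha,\beta)=\psi(\nu^{(l)})$ and $F'(\nu^{(l)};\alpha,\beta)=\psi'(\nu^{(l)})$. Then $F(\nu;\alpha,\beta)<\psi(\nu)$ for all real $\nu>\delta_r$ with $\nu\neq\nu^{(l)}$.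
   Context: $\psi'$ denotes the derivative of $\psi$ with respect to the real variable $\nu$. In the paper, $\nu^{(l)}$ is the current iterate of an iterative root-finding method for $\psi(\nu)=1$ on $[0,\infty)$, hence $\nu^{(l)}\ge 0$. *)

theory Defs
  imports "HOL-Analysis.Analysis"
begin

definition psi :: "nat \<Rightarrow> (nat \<Rightarrow> real) \<Rightarrow> (nat \<Rightarrow> complex) \<Rightarrow> real \<Rightarrow> real" where
  "psi r \<sigma> c \<nu> = (\<Sum>i=1..r. (cmod (c i))\<^sup>2 / ((\<sigma> i)\<^sup>2 + \<nu>)\<^sup>2)"

definition F :: "real \<Rightarrow> real \<Rightarrow> real \<Rightarrow> real" where
  "F \<nu> \<alpha> \<beta> = \<alpha> / (\<beta> - \<nu>)\<^sup>2"

end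

theory Submission
  imports Defs
begin
lemma amgm_aux:
  fixes y l :: real
  assumes "y > 0" "l > 0"
  shows "y^2 + 2*l^3/y - 3*l^2 = (y-l)^2*(y+2*l)/y"
proof -
  have "y^2 + 2*l^3/y - 3*l^2 = (y^3 + 2*l^3 - 3*l^2*y)/y" using assms by (simp add: field_simps power2_eq_square power3_eq_cube)
  also have "y^3 + 2*l^3 - 3*l^2*y = (y-l)^2*(y+2*l)" by (simp add: algebra_simps power2_eq_square power3_eq_cube)
  finally show ?thesis .
qed

lemma amgm_ge:
  fixes y l :: real
  assumes "y > 0" "l > 0"
  shows "y^2 + 2*l^3/y - 3*l^2 \<ge> 0"
  using assms by (simp add: amgm_aux)

lemma amgm_gt:
  fixes y l :: real
  assumes "y > 0" "l > 0" "y \<noteq> l"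
  shows "y^2 + 2*l^3/y - 3*l^2 > 0"
  using assms by (simp add: amgm_aux)

lemma term_deriv:
  fixes k s x :: real
  assumes nz: "s + x \<noteq> 0"
  shows "((\<lambda>v. k / (s + v)\<^sup>2) has_real_derivative - 2 * k / (s + x)^3) (at x)"
proof -
  have d1: "((\<lambda>v. s + v) has_real_derivative 1) (at x)"
    using DERIV_add[OF DERIV_const DERIV_ident] by simp
  have d2: "((\<lambda>v. (s + v)\<^sup>2) has_real_derivative 2 * (s + x)) (at x)"
    using DERIV_power[OF d1, of 2] by simp
  have d3: "((\<lambda>v. k / (s + v)\<^sup>2) has_real_derivative (0 * (s + x)\<^sup>2 - k * (2 * (s + x))) / ((s + x)\<^sup>2 * (s + x)\<^sup>2)) (at x)"
    by (rule DERIV_divide[OF DERIV_const d2]) (use nz in simp)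
  have e: "(0 * (s + x)\<^sup>2 - k * (2 * (s + x))) / ((s + x)\<^sup>2 * (s + x)\<^sup>2) = - 2 * k / (s + x)^3"
  proof -
    have gen: "(0 * u\<^sup>2 - k * (2 * u)) / (u\<^sup>2 * u\<^sup>2) = - 2 * k / u^3" if "u \<noteq> 0" for u :: real
      using that by (simp add: power2_eq_square power3_eq_cube divide_simps)
    show ?thesis using gen[OF nz] .
  qed
  show ?thesis using d3 unfolding e .
qed

lemma psi_deriv:
  assumes "\<And>i. i \<in> {1..r} \<Longrightarrow> (\<sigma> i)\<^sup>2 + x \<noteq> 0"
  shows "deriv (psi r \<sigma> c) x = (\<Sum>i=1..r. - 2 * (cmod (c i))\<^sup>2 / ((\<sigma> i)\<^sup>2 + x)^3)"
proof -
  have "((\<lambda>v. \<Sum>i=1..r. (cmod (c i))\<^sup>2 / ((\<sigma> i)\<^sup>2 + v)\<^sup>2) has_real_derivative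
        (\<Sum>i=1..r. - 2 * (cmod (c i))\<^sup>2 / ((\<sigma> i)\<^sup>2 + x)^3)) (at x)"
  proof (rule DERIV_sum)
    fix i assume i: "i \<in> {1..r}"
    show "((\<lambda>v. (cmod (c i))\<^sup>2 / ((\<sigma> i)\<^sup>2 + v)\<^sup>2) has_real_derivative
        - 2 * (cmod (c i))\<^sup>2 / ((\<sigma> i)\<^sup>2 + x)^3) (at x)"
      by (rule term_deriv) (use assms i in blast)
  qed
  moreover have "psi r \<sigma> c = (\<lambda>v. \<Sum>i=1..r. (cmod (c i))\<^sup>2 / ((\<sigma> i)\<^sup>2 + v)\<^sup>2)"
    by (rule ext) (simp add: psi_def)
  ultimately show ?thesis using DERIV_imp_deriv by simp
qed

theorem theorem1:
  fixes r :: nat and \<sigma> :: "nat \<Rightarrow> real" and c :: "nat \<Rightarrow> complex"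
    and \<nu>l \<nu> :: real
  assumes r: "r \<ge> 1"
    and mono: "\<And>i j. 1 \<le> i \<Longrightarrow> i \<le> j \<Longrightarrow> j \<le> r \<Longrightarrow> \<sigma> j \<le> \<sigma> i"
    and pos: "\<sigma> r > 0"
    and distinct: "\<exists>i\<in>{1..r}. \<exists>j\<in>{1..r}. c i \<noteq> 0 \<and> c j \<noteq> 0 \<and> - (\<sigma> i)\<^sup>2 \<noteq> - (\<sigma> j)\<^sup>2"
    and nul: "\<nu>l \<ge> 0"
    and \<nu>: "\<nu> > - (\<sigma> r)\<^sup>2" "\<nu> \<noteq> \<nu>l"
  shows "let \<alpha> = 4 * (psi r \<sigma> c \<nu>l)^3 / (deriv (psi r \<sigma> c) \<nu>l)\<^sup>2;
             \<beta> = \<nu>l + 2 * psi r \<sigma> c \<nu>l / deriv (psi r \<sigma> c) \<nu>l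
         in F \<nu> \<alpha> \<beta> < psi r \<sigma> c \<nu>"
proof -
  define a where "a i = (cmod (c i))^2" for i
  define t where "t i = (\<sigma> i)^2 + \<nu>l" for i
  define e where "e i = (\<sigma> i)^2 + \<nu>" for i
  define d where "d = \<nu> - \<nu>l"
  have dnz: "d \<noteq> 0" using \<nu>(2) d_def by simp
  have sq: "(\<sigma> i)^2 \<ge> (\<sigma> r)^2" if "i \<in> {1..r}" for i
  proof -
    have "\<sigma> i \<ge> \<sigma> r" using mono[of i r] that by auto
    then show ?thesis using pos by (simp add: power_mono)
  qed
  have tpos: "t i > 0" if "i \<in> {1..r}" for i
  proof -
    have "(\<sigma> r)^2 > 0" using pos by simp
    then show ?thesis using sq[OF that] nul unfolding t_def by linarith
  qed
  have epos: "e i > 0" if "i \<in> {1..r}" for i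
    using sq[OF that] \<nu>(1) unfolding e_def by linarith
  have ete: "e i = t i + d" for i by (simp add: e_def t_def d_def)
  have a0: "a i \<ge> 0" for i by (simp add: a_def)
  obtain i0 j0 where ij: "i0 \<in> {1..r}" "j0 \<in> {1..r}" "c i0 \<noteq> 0" "c j0 \<noteq> 0" "(\<sigma> i0)^2 \<noteq> (\<sigma> j0)^2"
    using distinct by auto
  have ai0: "a i0 > 0" "a j0 > 0" using ij by (auto simp: a_def)
  define A where "A = (\<Sum>i\<in>{1..r}. a i / (t i)^2)"
  define B where "B = (\<Sum>i\<in>{1..r}. a i / (t i)^3)"
  define C where "C = (\<Sum>i\<in>{1..r}. a i * e i / (t i)^3)"
  define P where "P = (\<Sum>i\<in>{1..r}. a i / (e i)^2)"
  have psil: "psi r \<sigma> c \<nu>l = A" by (simp add: psi_def A_def a_def t_def)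
  have psiv: "psi r \<sigma> c \<nu> = P" by (simp add: psi_def P_def a_def e_def)
  have der: "deriv (psi r \<sigma> c) \<nu>l = -2*B"
  proof -
    have "deriv (psi r \<sigma> c) \<nu>l = (\<Sum>i=1..r. - 2 * (cmod (c i))\<^sup>2 / ((\<sigma> i)\<^sup>2 + \<nu>l)^3)"
      by (rule psi_deriv) (use tpos t_def in force)
    also have "\<dots> = (\<Sum>i=1..r. -2 * (a i / (t i)^3))" by (simp add: a_def t_def)
    also have "\<dots> = -2*B" by (simp add: B_def sum_distrib_left)
    finally show ?thesis .
  qed
  have ti0: "t i0 > 0" "e i0 > 0" using tpos[OF ij(1)] epos[OF ij(1)] .
  have Apos: "A > 0" unfolding A_def
  proof (rule sum_pos2[of _ i0])
    fix i assume "i \<in> {1..r}" then show "0 \<le> a i / (t i)^2" using a0[of i] tpos[of i] by simp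
  qed (use ij ai0 ti0 in auto)
  have Bpos: "B > 0" unfolding B_def
  proof (rule sum_pos2[of _ i0])
    fix i assume "i \<in> {1..r}" then show "0 \<le> a i / (t i)^3" using a0[of i] tpos[of i] by simp
  qed (use ij ai0 ti0 in auto)
  have Cpos: "C > 0" unfolding C_def
  proof (rule sum_pos2[of _ i0])
    fix i assume "i \<in> {1..r}" then show "0 \<le> a i * e i / (t i)^3" using a0[of i] tpos[of i] epos[of i] by simp
  qed (use ij ai0 ti0 in auto)
  have CAB: "C = A + B*d"
  proof -
    have "C = (\<Sum>i\<in>{1..r}. a i / (t i)^2 + a i / (t i)^3 * d)"
      unfolding C_def
    proof (rule sum.cong[OF refl])
      fix i assume "i \<in> {1..r}"
      then have "t i > 0" by (rule tpos)
      then show "a i * e i / t i ^ 3 = a i / (t i)\<^sup>2 + a i / t i ^ 3 * d"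
        unfolding ete by (simp add: field_simps power2_eq_square power3_eq_cube)
    qed
    also have "\<dots> = A + B*d" by (simp add: A_def B_def sum.distrib sum_distrib_right)
    finally show ?thesis .
  qed
  have Fval: "F \<nu> (4 * A^3 / (-2*B)\<^sup>2) (\<nu>l + 2 * A / (-2*B)) = A^3/C^2"
  proof -
    have "\<nu>l + 2 * A / (-2*B) - \<nu> = - (A + B*d) / B" using Bpos unfolding d_def by (simp add: field_simps)
    then have "\<nu>l + 2 * A / (-2*B) - \<nu> = - C / B" using CAB by simp
    then have "F \<nu> (4 * A^3 / (-2*B)\<^sup>2) (\<nu>l + 2 * A / (-2*B)) = (4 * A^3 / (-2*B)\<^sup>2) / (- C / B)\<^sup>2"
      unfolding F_def by simp
    also have "\<dots> = A^3/C^2" using Bpos Cpos by (simp add: field_simps power2_eq_square power3_eq_cube)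
    finally show ?thesis .
  qed
  define l where "l = A / C"
  have lpos: "l > 0" using Apos Cpos l_def by simp
  define y where "y i = t i / e i" for i
  have ypos: "y i > 0" if "i \<in> {1..r}" for i using tpos[OF that] epos[OF that] y_def by simp
  have yne: "y i0 \<noteq> y j0"
  proof
    assume "y i0 = y j0"
    moreover have "e i0 \<noteq> 0" "e j0 \<noteq> 0" using epos[OF ij(1)] epos[OF ij(2)] by auto
    ultimately have "t i0 * e j0 = t j0 * e i0" unfolding y_def
      by (simp add: divide_simps)
    then have "t i0 * d = t j0 * d" unfolding ete by (simp add: algebra_simps)
    then have "t i0 = t j0" using dnz by simp
    then show False using ij(5) t_def by simp
  qed
  obtain k where k: "k \<in> {1..r}" "a k > 0" "y k \<noteq> l"
  proof (cases "y i0 = l")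
    case True
    then have "y j0 \<noteq> l" using yne by simp
    then show ?thesis using that ij(2) ai0(2) by blast
  next
    case False
    then show ?thesis using that ij(1) ai0(1) by blast
  qed
  have key: "(\<Sum>i\<in>{1..r}. a i/(t i)^2 * ((y i)^2 + 2*l^3/(y i) - 3*l^2)) > 0"
  proof (rule sum_pos2[of _ k])
    show "0 < a k/(t k)^2 * ((y k)^2 + 2*l^3/(y k) - 3*l^2)"
      using k(2) tpos[OF k(1)] amgm_gt[OF ypos[OF k(1)] lpos k(3)] by (intro mult_pos_pos divide_pos_pos) auto
    fix i assume ii: "i \<in> {1..r}"
    then show "0 \<le> a i/(t i)^2 * ((y i)^2 + 2*l^3/(y i) - 3*l^2)"
      using a0[of i] tpos[OF ii] amgm_ge[OF ypos[OF ii] lpos] by (intro mult_nonneg_nonneg divide_nonneg_pos) auto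
  qed (use k in simp_all)
  have expand: "(\<Sum>i\<in>{1..r}. a i/(t i)^2 * ((y i)^2 + 2*l^3/(y i) - 3*l^2)) = P + 2*l^3*C - 3*l^2*A"
  proof -
    have "(\<Sum>i\<in>{1..r}. a i/(t i)^2 * ((y i)^2 + 2*l^3/(y i) - 3*l^2))
        = (\<Sum>i\<in>{1..r}. a i / (e i)^2 + 2*l^3 * (a i * e i / (t i)^3) - 3*l^2 * (a i / (t i)^2))"
    proof (rule sum.cong[OF refl])
      fix i assume i: "i \<in> {1..r}"
      have "t i > 0" "e i > 0" using tpos[OF i] epos[OF i] .
      then show "a i/(t i)^2 * ((y i)^2 + 2*l^3/(y i) - 3*l^2)
        = a i / (e i)^2 + 2*l^3 * (a i * e i / (t i)^3) - 3*l^2 * (a i / (t i)^2)"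
        unfolding y_def by (simp add: field_simps power2_eq_square power3_eq_cube)
    qed
    also have "\<dots> = P + 2*l^3*C - 3*l^2*A"
      by (simp add: P_def C_def A_def sum.distrib sum_subtractf sum_distrib_left)
    finally show ?thesis .
  qed
  have "P + 2*l^3*C - 3*l^2*A = P - A^3/C^2"
    using Cpos unfolding l_def by (simp add: field_simps power2_eq_square power3_eq_cube)
  then have main: "A^3/C^2 < P" using key expand by simp
  show ?thesis unfolding Let_def psil psiv der using Fval main by simp
qed

end
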